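(* Let $d>k\geq1$ be integers, let $\beta>0$ and $\lambda_k>2\sqrt{\beta}$, and let $A:=\mathrm{diag}(\lambda_k,\dots,\lambda_k,2\sqrt\beta,\dots,2\sqrt\beta)\in\mathbb{R}^{d\times d}$, with $\lambda_k$ repeated $k$ times and $2\sqrt\beta$ repeated $d-k$ times. Let $U_k\in\mathbb{R}^{d\times k}$ be the matrix of the first $k$ standard basis vectors and $U_{-k}\in\mathbb{R}^{d\times(d-k)}$ that of the last $d-k$ standard basis vectors. Let $\varepsilon\in(0,1)$. Then there exist $X_0\in\mathrm{St}(d,k)$ with $\cos\theta_k(U_k,X_0)>0$ and perturbations $(\Xi_t)_{t\geq0}\subset\mathbb{R}^{d\times k}$ satisfying, for all $t\geq0$, $U_{-k}^\top\Xi_t=0$ and $\|U_k^\top\Xi_t\|_2\leq(\lambda_k-2\sqrt\beta)\cos\theta_k(U_k,X_t)$, such that the ANPM iterates $(X_t)_{t\geq0}$ on $A$ with momentum $\beta$ and these perturbations satisfy $\tan\theta_k(U_k,X_t)>\varepsilon$ for all $t\geq0$.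
   Context: $\mathrm{St}(d,k):=\{X\in\mathbb{R}^{d\times k}:X^\top X=I_k\}$. For $Y\in\mathbb{R}^{d\times k}$, $\mathrm{QR}(Y)$ is the pair $(X,R)$ with $Y=XR$, $X\in\mathrm{St}(d,k)$, $R$ upper triangular $k\times k$ with nonnegative diagonal (unique, $R$ invertible, when $Y$ has full column rank). For $U,X\in\mathrm{St}(d,k)$, $\theta_k(U,X):=\arccos\sigma_{\min}(U^\top X)\in[0,\pi/2]$. ANPM with momentum $\beta$ and perturbations $(\Xi_t)$ (which may depend on the iterates): given $X_0\in\mathrm{St}(d,k)$, $(X_1,R_1)=\mathrm{QR}(\tfrac12 AX_0+\Xi_0)$, and for $t\geq1$, $Y_{t+1}=AX_t-\beta X_{t-1}R_t^{-1}+\Xi_t$, $(X_{t+1},R_{t+1})=\mathrm{QR}(Y_{t+1})$. *)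

theory Defs
  imports "Jordan_Normal_Form.Matrix" "Jordan_Normal_Form.Gauss_Jordan_Elimination"
begin

definition stiefel :: "nat \<Rightarrow> nat \<Rightarrow> real mat set" where
  "stiefel d k = {X. X \<in> carrier_mat d k \<and> transpose_mat X * X = 1\<^sub>m k}"

definition vnorm :: "real vec \<Rightarrow> real" where
  "vnorm v = sqrt (v \<bullet> v)"

(* smallest singular value of M (with at least as many rows as columns):
   min of |Mv| over unit vectors v *)
definition sigma_min :: "real mat \<Rightarrow> real" where
  "sigma_min M = Inf {vnorm (M *\<^sub>v v) | v. v \<in> carrier_vec (dim_col M) \<and> vnorm v = 1}"

definition spec_norm :: "real mat \<Rightarrow> real" where
  "spec_norm M = Sup {vnorm (M *\<^sub>v v) | v. v \<in> carrier_vec (dim_col M) \<and> vnorm v = 1}"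

definition theta :: "real mat \<Rightarrow> real mat \<Rightarrow> real" where
  "theta U X = arccos (sigma_min (transpose_mat U * X))"

definition is_QR :: "nat \<Rightarrow> nat \<Rightarrow> real mat \<Rightarrow> real mat \<Rightarrow> real mat \<Rightarrow> bool" where
  "is_QR d k Y X R \<longleftrightarrow> X \<in> stiefel d k \<and> R \<in> carrier_mat k k \<and> upper_triangular R \<and>
     (\<forall>i<k. R $$ (i,i) \<ge> 0) \<and> Y = X * R"

(* (X_t, R_t)_t are the (well-defined: R_t invertible) ANPM iterates on A with momentum beta
   and perturbations Xi; R 0 is unused *)
definition anpm :: "nat \<Rightarrow> nat \<Rightarrow> real mat \<Rightarrow> real \<Rightarrow> (nat \<Rightarrow> real mat)
    \<Rightarrow> (nat \<Rightarrow> real mat) \<Rightarrow> (nat \<Rightarrow> real mat) \<Rightarrow> bool" where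
  "anpm d k A \<beta> Xi X R \<longleftrightarrow>
     X 0 \<in> stiefel d k \<and>
     is_QR d k ((1/2) \<cdot>\<^sub>m (A * X 0) + Xi 0) (X 1) (R 1) \<and> invertible_mat (R 1) \<and>
     (\<forall>t\<ge>1. is_QR d k (A * X t - \<beta> \<cdot>\<^sub>m (X (t - 1) * the (mat_inverse (R t))) + Xi t)
                 (X (t + 1)) (R (t + 1)) \<and> invertible_mat (R (t + 1)))"

definition diagA :: "nat \<Rightarrow> nat \<Rightarrow> real \<Rightarrow> real \<Rightarrow> real mat" where
  "diagA d k lam \<beta> = mat_diag d (\<lambda>i. if i < k then lam else 2 * sqrt \<beta>)"

definition Ufirst :: "nat \<Rightarrow> nat \<Rightarrow> real mat" where
  "Ufirst d k = mat d k (\<lambda>(i,j). if i = j then 1 else 0)"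

definition Ulast :: "nat \<Rightarrow> nat \<Rightarrow> real mat" where
  "Ulast d k = mat d (d - k) (\<lambda>(i,j). if i = k + j then 1 else 0)"

end

theory Submission
  imports Defs
begin


lemma UfT_mult:
  assumes M: "M \<in> carrier_mat d n" and kd: "k \<le> d"
  shows "transpose_mat (Ufirst d k) * M = mat k n (\<lambda>(i,j). M $$ (i,j))"
proof (rule eq_matI)
  fix i j assume i: "i < dim_row (mat k n (\<lambda>(i,j). M $$ (i,j)))" and j: "j < dim_col (mat k n (\<lambda>(i,j). M $$ (i,j)))"
  hence i: "i < k" and j: "j < n" by auto
  have "(transpose_mat (Ufirst d k) * M) $$ (i,j) = (\<Sum>l<d. (if l = i then 1 else 0) * M $$ (l,j))"
    using i j M kd unfolding Ufirst_def by (auto simp: scalar_prod_def lessThan_atLeast0 intro!: sum.cong)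
  also have "\<dots> = M $$ (i,j)" using i kd by (subst sum.remove[of _ i], auto)
  finally show "(transpose_mat (Ufirst d k) * M) $$ (i,j) = mat k n (\<lambda>(i,j). M $$ (i,j)) $$ (i,j)" using i j by simp
qed (insert M, auto simp: Ufirst_def)

lemma UlT_mult:
  assumes M: "M \<in> carrier_mat d n" and kd: "k \<le> d"
  shows "transpose_mat (Ulast d k) * M = mat (d-k) n (\<lambda>(i,j). M $$ (k+i,j))"
proof (rule eq_matI)
  fix i j assume i: "i < dim_row (mat (d-k) n (\<lambda>(i,j). M $$ (k+i,j)))" and j: "j < dim_col (mat (d-k) n (\<lambda>(i,j). M $$ (k+i,j)))"
  hence i: "i < d - k" and j: "j < n" by auto
  have "(transpose_mat (Ulast d k) * M) $$ (i,j) = (\<Sum>l<d. (if l = k + i then 1 else 0) * M $$ (l,j))"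
    using i j M kd unfolding Ulast_def by (auto simp: scalar_prod_def lessThan_atLeast0 intro!: sum.cong)
  also have "\<dots> = M $$ (k+i,j)" using i kd by (subst sum.remove[of _ "k+i"], auto)
  finally show "(transpose_mat (Ulast d k) * M) $$ (i,j) = mat (d-k) n (\<lambda>(i,j). M $$ (k+i,j)) $$ (i,j)" using i j by simp
qed (insert M, auto simp: Ulast_def)

lemma vnorm_diag:
  assumes v: "v \<in> carrier_vec k"
  shows "vnorm (mat_diag k f *\<^sub>v v) = sqrt (\<Sum>i<k. (f i)^2 * (v $ i)^2)"
proof -
  have "mat_diag k f *\<^sub>v v = vec k (\<lambda>i. f i * v $ i)"
  proof (rule eq_vecI)
    fix i assume "i < dim_vec (vec k (\<lambda>i. f i * v $ i))"
    hence i: "i < k" by simp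
    have "(mat_diag k f *\<^sub>v v) $ i = (\<Sum>l<k. (if i = l then f l else 0) * v $ l)"
      using i v by (auto simp: mat_diag_def mult_mat_vec_def scalar_prod_def lessThan_atLeast0 intro!: sum.cong)
    also have "\<dots> = f i * v $ i" using i by (subst sum.remove[of _ i], auto)
    finally show "(mat_diag k f *\<^sub>v v) $ i = vec k (\<lambda>i. f i * v $ i) $ i" using i by simp
  qed (simp add: mat_diag_def)
  thus ?thesis unfolding vnorm_def by (simp add: scalar_prod_def lessThan_atLeast0 power2_eq_square algebra_simps)
qed

lemma vnorm_one: assumes "v \<in> carrier_vec k" "vnorm v = 1" shows "(\<Sum>i<k. (v $ i)^2) = 1"
proof -
  have "v \<bullet> v = (\<Sum>i<k. (v $ i)^2)" using assms by (simp add: scalar_prod_def lessThan_atLeast0 power2_eq_square)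
  moreover have "v \<bullet> v \<ge> 0" using assms by (simp add: scalar_prod_def sum_nonneg)
  ultimately show ?thesis using assms(2) unfolding vnorm_def by (metis real_sqrt_eq_1_iff)
qed

lemma unit_vnorm: "j < k \<Longrightarrow> vnorm (unit_vec k j) = 1"
  unfolding vnorm_def by simp




definition X0 :: "nat \<Rightarrow> nat \<Rightarrow> real mat" where
  "X0 d k = mat d k (\<lambda>(i,j). if j = 0 then (if i = 0 then 3/5 else if i = k then 4/5 else 0)
                            else (if i = j then 1 else 0))"

lemma X0_carrier: "X0 d k \<in> carrier_mat d k" by (simp add: X0_def)

lemma X0_stiefel: assumes "1 \<le> k" "k < d" shows "X0 d k \<in> stiefel d k"
  unfolding stiefel_def
proof (intro CollectI conjI X0_carrier eq_matI)
  fix i j assume "i < dim_row (1\<^sub>m k :: real mat)" "j < dim_col (1\<^sub>m k :: real mat)"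
  hence i: "i < k" and j: "j < k" by auto
  have e: "(transpose_mat (X0 d k) * X0 d k) $$ (i,j) = (\<Sum>l<d. X0 d k $$ (l,i) * X0 d k $$ (l,j))"
    using i j assms by (simp add: X0_def scalar_prod_def lessThan_atLeast0)
  have "(\<Sum>l<d. X0 d k $$ (l,i) * X0 d k $$ (l,j)) = (if i = j then 1 else 0)"
  proof (cases "i = 0")
    case True note i0 = True
    show ?thesis
    proof (cases "j = 0")
      case True
      have "(\<Sum>l<d. X0 d k $$ (l,i) * X0 d k $$ (l,j)) = (\<Sum>l<d. (if l = 0 then 9/25 else 0) + (if l = k then 16/25 else 0))"
        using i0 True assms by (intro sum.cong) (auto simp: X0_def)
      also have "\<dots> = 1" using assms by (simp add: sum.distrib)
      finally show ?thesis using i0 True by simp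
    next
      case False
      have "(\<Sum>l<d. X0 d k $$ (l,i) * X0 d k $$ (l,j)) = (\<Sum>l<d. 0)"
        using i0 False assms j by (intro sum.cong) (auto simp: X0_def)
      thus ?thesis using i0 False by simp
    qed
  next
    case False note i0 = False
    show ?thesis
    proof (cases "j = 0")
      case True
      have "(\<Sum>l<d. X0 d k $$ (l,i) * X0 d k $$ (l,j)) = (\<Sum>l<d. 0)"
        using i0 True assms i by (intro sum.cong) (auto simp: X0_def)
      thus ?thesis using i0 True by simp
    next
      case False
      have "(\<Sum>l<d. X0 d k $$ (l,i) * X0 d k $$ (l,j)) = (\<Sum>l<d. if l = i then (if i = j then 1 else 0) else 0)"
        using i0 False assms i j by (intro sum.cong) (auto simp: X0_def)
      also have "\<dots> = (if i = j then 1 else 0)" using i assms by simp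
      finally show ?thesis .
    qed
  qed
  thus "(transpose_mat (X0 d k) * X0 d k) $$ (i,j) = 1\<^sub>m k $$ (i,j)" using e i j by simp
qed (auto simp: X0_def)

lemma UX0: assumes "1 \<le> k" "k < d"
  shows "transpose_mat (Ufirst d k) * X0 d k = mat_diag k (\<lambda>i. if i = 0 then 3/5 else 1)"
  using assms by (subst UfT_mult[OF X0_carrier]) (auto simp: X0_def mat_diag_def intro!: eq_matI)

lemma sigma_min_X0: assumes "1 \<le> k" "k < d"
  shows "sigma_min (transpose_mat (Ufirst d k) * X0 d k) = 3/5"
proof -
  let ?f = "\<lambda>i::nat. if i = 0 then (3/5::real) else 1"
  let ?S = "{vnorm (mat_diag k ?f *\<^sub>v v) | v. v \<in> carrier_vec k \<and> vnorm v = 1}"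
  have "3/5 \<in> ?S"
  proof -
    have "vnorm (mat_diag k ?f *\<^sub>v unit_vec k 0) = 3/5"
    proof -
      have "(\<Sum>i<k. (?f i)^2 * (unit_vec k 0 $ i)^2) = (\<Sum>i<k. if i = 0 then 9/25 else 0)"
        using assms by (intro sum.cong) (auto simp: unit_vec_def power2_eq_square)
      also have "\<dots> = 9/25" using assms by simp
      finally have s: "(\<Sum>i<k. (?f i)^2 * (unit_vec k 0 $ i)^2) = 9/25" .
      have "sqrt (9/25::real) = 3/5" by (simp add: real_sqrt_divide)
      thus ?thesis by (simp only: vnorm_diag[OF unit_vec_carrier] s)
    qed
    moreover have "vnorm (unit_vec k 0) = 1" using assms by (simp add: unit_vnorm)
    ultimately show ?thesis by force
  qed
  moreover have "\<forall>x\<in>?S. 3/5 \<le> x"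
  proof
    fix x assume "x \<in> ?S"
    then obtain v where v: "v \<in> carrier_vec k" "vnorm v = 1" and x: "x = vnorm (mat_diag k ?f *\<^sub>v v)" by auto
    have "(9/25::real) = 9/25 * (\<Sum>i<k. (v $ i)^2)" using vnorm_one[OF v] by simp
    also have "\<dots> = (\<Sum>i<k. 9/25 * (v $ i)^2)" by (simp add: sum_distrib_left)
    also have "\<dots> \<le> (\<Sum>i<k. (?f i)^2 * (v $ i)^2)" by (intro sum_mono) (auto simp: power2_eq_square)
    finally have "sqrt (9/25) \<le> x" unfolding x vnorm_diag[OF v(1)] by simp
    moreover have "sqrt (9/25::real) = 3/5" by (simp add: real_sqrt_divide)
    ultimately show "3/5 \<le> x" by simp
  qed
  ultimately have "Inf ?S = 3/5" by (intro cInf_eq_minimum) auto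
  moreover have "dim_col (mat_diag k ?f) = k" by (simp add: mat_diag_def)
  ultimately show ?thesis unfolding sigma_min_def UX0[OF assms] by simp
qed

lemma cos_theta_X0: assumes "1 \<le> k" "k < d" shows "cos (theta (Ufirst d k) (X0 d k)) = 3/5"
  unfolding theta_def sigma_min_X0[OF assms] by simp

lemma tan_theta_X0: assumes "1 \<le> k" "k < d" shows "tan (theta (Ufirst d k) (X0 d k)) = 4/3"
proof -
  have "sin (arccos (3/5::real)) = sqrt (1 - (3/5)^2)" by (rule sin_arccos) auto
  also have "\<dots> = sqrt ((4/5)^2)" by (rule arg_cong[where f = sqrt]) (simp add: power2_eq_square)
  also have "\<dots> = 4/5" by (rule real_sqrt_unique) auto
  finally have "sin (theta (Ufirst d k) (X0 d k)) = 4/5"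
    unfolding theta_def sigma_min_X0[OF assms] .
  thus ?thesis unfolding tan_def cos_theta_X0[OF assms] by simp
qed




lemma mat_diag_cong: "(\<And>i. i < n \<Longrightarrow> f i = g i) \<Longrightarrow> mat_diag n f = mat_diag n g"
  by (auto simp: mat_diag_def intro!: eq_matI)

lemma diag_inv:
  fixes f :: "nat \<Rightarrow> real"
  assumes nz: "\<And>i. i < n \<Longrightarrow> f i \<noteq> 0"
  shows "the (mat_inverse (mat_diag n f)) = mat_diag n (\<lambda>i. 1 / f i)"
    and "invertible_mat (mat_diag n f)"
proof -
  let ?D = "mat_diag n f" and ?E = "mat_diag n (\<lambda>i. 1 / f i)"
  have DE: "?D * ?E = 1\<^sub>m n"
  proof -
    have "?D * ?E = mat_diag n (\<lambda>i. f i * (1 / f i))" by (rule mat_diag_diag)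
    also have "\<dots> = mat_diag n (\<lambda>i. 1)" by (rule mat_diag_cong) (simp add: nz)
    finally show ?thesis by simp
  qed
  have ED: "?E * ?D = 1\<^sub>m n"
  proof -
    have "?E * ?D = mat_diag n (\<lambda>i. 1 / f i * f i)" by (rule mat_diag_diag)
    also have "\<dots> = mat_diag n (\<lambda>i. 1)" by (rule mat_diag_cong) (simp add: nz)
    finally show ?thesis by simp
  qed
  show "invertible_mat ?D" unfolding invertible_mat_def inverts_mat_def square_mat.simps
    using DE ED by (auto simp: mat_diag_def)
  show "the (mat_inverse ?D) = ?E"
  proof (cases "mat_inverse ?D")
    case None
    from mat_inverse(1)[OF mat_diag_dim None, of "()"]
    have "?D \<notin> Units (ring_mat TYPE(real) n ())" .
    moreover have "?D \<in> Units (ring_mat TYPE(real) n ())"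
      unfolding Units_def ring_mat_def using DE ED by (auto simp del: mat_diag_diag intro!: bexI[of _ ?E])
    ultimately show ?thesis by blast
  next
    case (Some B)
    from mat_inverse(2)[OF mat_diag_dim Some] have B: "?D * B = 1\<^sub>m n" "B \<in> carrier_mat n n" by auto
    have "B = (?E * ?D) * B" using ED B by simp
    also have "\<dots> = ?E * (?D * B)" by (rule assoc_mult_mat[OF mat_diag_dim mat_diag_dim B(2)])
    also have "\<dots> = ?E" using B by (simp add: right_mult_one_mat[OF mat_diag_dim])
    finally show ?thesis using Some by simp
  qed
qed

fun qq :: "real \<Rightarrow> real \<Rightarrow> nat \<Rightarrow> real" where
  "qq lam \<beta> 0 = lam / 2"
| "qq lam \<beta> (Suc n) = lam - \<beta> / qq lam \<beta> n"

lemma qq_ge: assumes "\<beta> > 0" "lam > 2 * sqrt \<beta>" shows "qq lam \<beta> n \<ge> lam / 2"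
proof (induction n)
  case 0 thus ?case by simp
next
  case (Suc n)
  have sb: "sqrt \<beta> > 0" using assms by simp
  have l0: "lam > 0" using assms sb by linarith
  have "lam^2 \<ge> (2 * sqrt \<beta>)^2" using assms sb by (intro power_mono) auto
  hence l2: "lam^2 \<ge> 4 * \<beta>" using assms by (simp add: power_mult_distrib)
  have "\<beta> / qq lam \<beta> n \<le> \<beta> / (lam / 2)"
    using Suc l0 assms by (intro divide_left_mono) auto
  also have "\<dots> \<le> lam / 2" using l2 l0 by (simp add: field_simps power2_eq_square)
  finally show ?case by simp
qed

definition RR :: "nat \<Rightarrow> real \<Rightarrow> real \<Rightarrow> nat \<Rightarrow> real mat" where
  "RR k lam \<beta> t = mat_diag k (\<lambda>i. if i = 0 then sqrt \<beta> else qq lam \<beta> (t - 1))"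

definition XiM :: "nat \<Rightarrow> nat \<Rightarrow> real \<Rightarrow> real \<Rightarrow> nat \<Rightarrow> real mat" where
  "XiM d k lam \<beta> t = mat d k (\<lambda>(i,j). if i = 0 \<and> j = 0 then
      (if t = 0 then - (3/5) * (lam - 2 * sqrt \<beta>) / 2 else - (3/5) * (lam - 2 * sqrt \<beta>)) else 0)"

lemma XiM_carrier: "XiM d k lam \<beta> t \<in> carrier_mat d k" by (simp add: XiM_def)

lemma Ulast_Xi: assumes "1 \<le> k" "k < d"
  shows "transpose_mat (Ulast d k) * XiM d k lam \<beta> t = 0\<^sub>m (d - k) k"
  using assms by (subst UlT_mult[OF XiM_carrier]) (auto simp: XiM_def intro!: eq_matI)

lemma spec_Xi: assumes "1 \<le> k" "k < d" "\<beta> > 0" "lam > 2 * sqrt \<beta>"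
  shows "spec_norm (transpose_mat (Ufirst d k) * XiM d k lam \<beta> t) \<le> (lam - 2 * sqrt \<beta>) * (3/5)"
proof -
  define a where "a = (if t = 0 then - (3/5) * (lam - 2 * sqrt \<beta>) / 2 else - (3/5) * (lam - 2 * sqrt \<beta>))"
  let ?f = "\<lambda>i::nat. if i = 0 then a else 0"
  have M: "transpose_mat (Ufirst d k) * XiM d k lam \<beta> t = mat_diag k ?f"
  proof -
    have "transpose_mat (Ufirst d k) * XiM d k lam \<beta> t = mat k k (\<lambda>(i,j). XiM d k lam \<beta> t $$ (i,j))"
      by (rule UfT_mult[OF XiM_carrier]) (use assms in simp)
    also have "\<dots> = mat_diag k ?f"
    proof (rule eq_matI)
      fix i j assume "i < dim_row (mat_diag k ?f)" "j < dim_col (mat_diag k ?f)"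
      hence ij: "i < k" "j < k" by (simp_all add: mat_diag_def)
      thus "mat k k (\<lambda>(i,j). XiM d k lam \<beta> t $$ (i,j)) $$ (i,j) = mat_diag k ?f $$ (i,j)"
        using assms by (simp add: XiM_def mat_diag_def a_def)
    qed (simp_all add: mat_diag_def)
    finally show ?thesis .
  qed
  let ?S = "{vnorm (mat_diag k ?f *\<^sub>v v) | v. v \<in> carrier_vec k \<and> vnorm v = 1}"
  have "vnorm (mat_diag k ?f *\<^sub>v unit_vec k 0) \<in> ?S"
    using unit_vnorm[of 0 k] assms by (intro CollectI exI[of _ "unit_vec k 0"]) simp
  hence ne: "?S \<noteq> {}" by blast
  have "\<forall>x\<in>?S. x \<le> \<bar>a\<bar>"
  proof
    fix x assume "x \<in> ?S"
    then obtain v where v: "v \<in> carrier_vec k" "vnorm v = 1" and x: "x = vnorm (mat_diag k ?f *\<^sub>v v)" by blast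
    have "(\<Sum>i<k. (?f i)^2 * (v $ i)^2) = (\<Sum>i<k. if i = 0 then a^2 * (v $ 0)^2 else 0)"
      by (intro sum.cong) auto
    also have "\<dots> = a^2 * (v $ 0)^2" using assms by simp
    also have "\<dots> \<le> a^2 * 1"
    proof -
      have "(v $ 0)^2 \<le> (\<Sum>i<k. (v $ i)^2)" using assms by (intro member_le_sum) auto
      thus ?thesis using vnorm_one[OF v] by (intro mult_left_mono) auto
    qed
    finally have s: "(\<Sum>i<k. (?f i)^2 * (v $ i)^2) \<le> a^2" by simp
    have "x = sqrt (\<Sum>i<k. (?f i)^2 * (v $ i)^2)" unfolding x by (rule vnorm_diag[OF v(1)])
    also have "\<dots> \<le> sqrt (a^2)" using s by (rule real_sqrt_le_mono)
    finally show "x \<le> \<bar>a\<bar>" by simp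
  qed
  hence "Sup ?S \<le> \<bar>a\<bar>" using ne by (intro cSup_least) auto
  moreover have "dim_col (mat_diag k ?f) = k" by (simp add: mat_diag_def)
  moreover have "\<bar>a\<bar> \<le> (lam - 2 * sqrt \<beta>) * (3/5)"
  proof -
    have p: "lam - 2 * sqrt \<beta> > 0" using assms by simp
    show ?thesis
    proof (cases "t = 0")
      case True
      hence "a = - ((lam - 2 * sqrt \<beta>) * (3/10))" unfolding a_def by simp
      thus ?thesis using p by simp
    next
      case False
      hence "a = - ((lam - 2 * sqrt \<beta>) * (3/5))" unfolding a_def by simp
      thus ?thesis using p by simp
    qed
  qed
  ultimately show ?thesis unfolding spec_norm_def M by simp
qed




lemma diagA_X0: "diagA d k lam \<beta> * X0 d k = mat d k (\<lambda>(i,j). (if i < k then lam else 2 * sqrt \<beta>) * X0 d k $$ (i,j))"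
  unfolding diagA_def by (rule mat_diag_mult_left[OF X0_carrier])

lemma X0_RR: "X0 d k * RR k lam \<beta> t = mat d k (\<lambda>(i,j). X0 d k $$ (i,j) * (if j = 0 then sqrt \<beta> else qq lam \<beta> (t - 1)))"
  unfolding RR_def by (rule mat_diag_mult_right[OF X0_carrier])

lemma X0_entry: "i < d \<Longrightarrow> j < k \<Longrightarrow> X0 d k $$ (i,j) =
   (if j = 0 then (if i = 0 then 3/5 else if i = k then 4/5 else 0) else (if i = j then 1 else 0))"
  by (simp add: X0_def)

lemma XiM_entry: "i < d \<Longrightarrow> j < k \<Longrightarrow> XiM d k lam \<beta> t $$ (i,j) = (if i = 0 \<and> j = 0 then
      (if t = 0 then - (3/5) * (lam - 2 * sqrt \<beta>) / 2 else - (3/5) * (lam - 2 * sqrt \<beta>)) else 0)"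
  by (simp add: XiM_def)

lemma dim_XiM[simp]: "dim_row (XiM d k lam \<beta> t) = d" "dim_col (XiM d k lam \<beta> t) = k"
  by (simp_all add: XiM_def)

lemma dim_X0[simp]: "dim_row (X0 d k) = d" "dim_col (X0 d k) = k"
  by (simp_all add: X0_def)

lemma E0: assumes "1 \<le> k" "k < d" "\<beta> > 0"
  shows "(1/2) \<cdot>\<^sub>m (diagA d k lam \<beta> * X0 d k) + XiM d k lam \<beta> 0 = X0 d k * RR k lam \<beta> 1"
proof (rule eq_matI)
  fix i j assume "i < dim_row (X0 d k * RR k lam \<beta> 1)" "j < dim_col (X0 d k * RR k lam \<beta> 1)"
  hence i: "i < d" and j: "j < k" by (simp_all add: X0_RR)
  have sb: "sqrt \<beta> > 0" using assms by simp
  have "((1/2) \<cdot>\<^sub>m (diagA d k lam \<beta> * X0 d k) + XiM d k lam \<beta> 0) $$ (i,j)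
     = (1/2) * ((if i < k then lam else 2 * sqrt \<beta>) * X0 d k $$ (i,j)) + XiM d k lam \<beta> 0 $$ (i,j)"
    using i j by (simp add: diagA_X0)
  also have "\<dots> = X0 d k $$ (i,j) * (if j = 0 then sqrt \<beta> else qq lam \<beta> 0)"
    unfolding X0_entry[OF i j] XiM_entry[OF i j] using assms i j sb
    by (cases "j = 0"; cases "i = 0"; cases "i = k"; simp add: field_simps)
  also have "\<dots> = (X0 d k * RR k lam \<beta> 1) $$ (i,j)" using i j by (simp add: X0_RR)
  finally show "((1/2) \<cdot>\<^sub>m (diagA d k lam \<beta> * X0 d k) + XiM d k lam \<beta> 0) $$ (i,j) = (X0 d k * RR k lam \<beta> 1) $$ (i,j)" .
qed (simp_all add: X0_RR diagA_X0 XiM_def)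

lemma RR_inv: assumes "\<beta> > 0" "lam > 2 * sqrt \<beta>"
  shows "the (mat_inverse (RR k lam \<beta> t)) = mat_diag k (\<lambda>i. 1 / (if i = 0 then sqrt \<beta> else qq lam \<beta> (t - 1)))"
    and "invertible_mat (RR k lam \<beta> t)"
proof -
  have "\<And>i. (if i = 0 then sqrt \<beta> else qq lam \<beta> (t - 1)) \<noteq> 0"
  proof -
    fix i
    have "qq lam \<beta> (t - 1) \<ge> lam / 2" by (rule qq_ge[OF assms])
    moreover have "sqrt \<beta> > 0" using assms by simp
    ultimately have "qq lam \<beta> (t - 1) > 0" using assms by linarith
    thus "(if i = 0 then sqrt \<beta> else qq lam \<beta> (t - 1)) \<noteq> 0" using \<open>sqrt \<beta> > 0\<close> by simp
  qed
  thus "the (mat_inverse (RR k lam \<beta> t)) = mat_diag k (\<lambda>i. 1 / (if i = 0 then sqrt \<beta> else qq lam \<beta> (t - 1)))"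
    and "invertible_mat (RR k lam \<beta> t)" unfolding RR_def by (rule diag_inv)+
qed

lemma Et: assumes "1 \<le> k" "k < d" "\<beta> > 0" "lam > 2 * sqrt \<beta>" "t \<ge> 1"
  shows "diagA d k lam \<beta> * X0 d k - \<beta> \<cdot>\<^sub>m (X0 d k * the (mat_inverse (RR k lam \<beta> t))) + XiM d k lam \<beta> t
       = X0 d k * RR k lam \<beta> (t + 1)"
proof (rule eq_matI)
  fix i j assume "i < dim_row (X0 d k * RR k lam \<beta> (t+1))" "j < dim_col (X0 d k * RR k lam \<beta> (t+1))"
  hence i: "i < d" and j: "j < k" by (simp_all add: X0_RR)
  have sb: "sqrt \<beta> > 0" using assms by simp
  have q: "qq lam \<beta> (t - 1) > 0" using qq_ge[OF assms(3,4), of "t-1"] assms sb by linarith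
  have qt: "qq lam \<beta> t = lam - \<beta> / qq lam \<beta> (t - 1)" using assms(5) by (cases t) auto
  have inv: "X0 d k * the (mat_inverse (RR k lam \<beta> t)) = mat d k (\<lambda>(i,j). X0 d k $$ (i,j) * (1 / (if j = 0 then sqrt \<beta> else qq lam \<beta> (t - 1))))"
    unfolding RR_inv(1)[OF assms(3,4)] by (rule mat_diag_mult_right[OF X0_carrier])
  have "(diagA d k lam \<beta> * X0 d k - \<beta> \<cdot>\<^sub>m (X0 d k * the (mat_inverse (RR k lam \<beta> t))) + XiM d k lam \<beta> t) $$ (i,j)
     = (if i < k then lam else 2 * sqrt \<beta>) * X0 d k $$ (i,j)
       - \<beta> * (X0 d k $$ (i,j) * (1 / (if j = 0 then sqrt \<beta> else qq lam \<beta> (t - 1))))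
       + XiM d k lam \<beta> t $$ (i,j)"
    using i j by (simp add: diagA_X0 inv)
  also have "\<dots> = X0 d k $$ (i,j) * (if j = 0 then sqrt \<beta> else qq lam \<beta> t)"
    unfolding X0_entry[OF i j] XiM_entry[OF i j] qt using assms i j sb q
    by (cases "j = 0"; cases "i = 0"; cases "i = k"; simp add: field_simps)
  also have "\<dots> = (X0 d k * RR k lam \<beta> (t+1)) $$ (i,j)" using i j by (simp add: X0_RR)
  finally show "(diagA d k lam \<beta> * X0 d k - \<beta> \<cdot>\<^sub>m (X0 d k * the (mat_inverse (RR k lam \<beta> t))) + XiM d k lam \<beta> t) $$ (i,j) = (X0 d k * RR k lam \<beta> (t+1)) $$ (i,j)" .
qed (simp_all add: X0_RR diagA_X0 XiM_def)




lemma RR_QR: assumes "1 \<le> k" "k < d" "\<beta> > 0" "lam > 2 * sqrt \<beta>"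
  shows "RR k lam \<beta> t \<in> carrier_mat k k \<and> upper_triangular (RR k lam \<beta> t) \<and>
     (\<forall>i<k. RR k lam \<beta> t $$ (i,i) \<ge> 0)"
proof -
  have "qq lam \<beta> (t - 1) \<ge> lam / 2" by (rule qq_ge[OF assms(3,4)])
  moreover have "sqrt \<beta> > 0" using assms by simp
  ultimately have "qq lam \<beta> (t - 1) > 0" using assms by linarith
  thus ?thesis using \<open>sqrt \<beta> > 0\<close> unfolding RR_def by (auto simp: upper_triangular_def mat_diag_def)
qed

theorem theorem4:
  fixes d k :: nat and \<beta> lam \<epsilon> :: real
  assumes "1 \<le> k" and "k < d" and "\<beta> > 0" and "lam > 2 * sqrt \<beta>"
    and "0 < \<epsilon>" and "\<epsilon> < 1"
  shows "\<exists>X R Xi.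
    X 0 \<in> stiefel d k \<and> cos (theta (Ufirst d k) (X 0)) > 0 \<and>
    (\<forall>t. Xi t \<in> carrier_mat d k \<and>
         transpose_mat (Ulast d k) * Xi t = 0\<^sub>m (d - k) k \<and>
         spec_norm (transpose_mat (Ufirst d k) * Xi t)
           \<le> (lam - 2 * sqrt \<beta>) * cos (theta (Ufirst d k) (X t))) \<and>
    anpm d k (diagA d k lam \<beta>) \<beta> Xi X R \<and>
    (\<forall>t. tan (theta (Ufirst d k) (X t)) > \<epsilon>)"
proof (rule exI[of _ "\<lambda>_. X0 d k"], rule exI[of _ "RR k lam \<beta>"], rule exI[of _ "XiM d k lam \<beta>"], intro conjI allI)
  show "X0 d k \<in> stiefel d k" by (rule X0_stiefel[OF assms(1,2)])
  show "cos (theta (Ufirst d k) (X0 d k)) > 0" using cos_theta_X0[OF assms(1,2)] by simp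
  fix t
  show "XiM d k lam \<beta> t \<in> carrier_mat d k" by (rule XiM_carrier)
  show "transpose_mat (Ulast d k) * XiM d k lam \<beta> t = 0\<^sub>m (d - k) k" by (rule Ulast_Xi[OF assms(1,2)])
  show "spec_norm (transpose_mat (Ufirst d k) * XiM d k lam \<beta> t)
           \<le> (lam - 2 * sqrt \<beta>) * cos (theta (Ufirst d k) (X0 d k))"
    unfolding cos_theta_X0[OF assms(1,2)] by (rule spec_Xi[OF assms(1-4)])
  show "tan (theta (Ufirst d k) (X0 d k)) > \<epsilon>" using tan_theta_X0[OF assms(1,2)] assms(6) by simp
next
  show "anpm d k (diagA d k lam \<beta>) \<beta> (XiM d k lam \<beta>) (\<lambda>_. X0 d k) (RR k lam \<beta>)"
    unfolding anpm_def is_QR_def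
    using X0_stiefel[OF assms(1,2)] RR_QR[OF assms(1-4)] RR_inv(2)[OF assms(3,4)]
      E0[OF assms(1-3)] Et[OF assms(1-4)] by auto
qed


end
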